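(* Let $a,b,c$ be positive numbers with $a<b<c$ and $b-a<c-\lfloor c/b\rfloor b<a$. Then for every $t\in\mathcal S_{a,b,c}$ there is exactly one vector $\mathbf x\in\mathcal B_b^0$ with $\mathbf M_{a,b,c}(t)\mathbf x=\mathbf 1$.
   Context: For $a,b,c>0$ and $t\in\mathbb R$, $\mathbf M_{a,b,c}(t)=(\chi_{[0,c)}(t-\mu+\lambda))_{\mu\in a\mathbb Z,\lambda\in b\mathbb Z}$ is the infinite matrix with rows indexed by $a\mathbb Z$ and columns by $b\mathbb Z$, acting by $(\mathbf M_{a,b,c}(t)\mathbf x)(\mu)=\sum_{\lambda\in b\mathbb Z}\chi_{[0,c)}(t-\mu+\lambda)\mathbf x(\lambda)$. $\mathcal B_b$ is the set of vectors $(\mathbf x(\lambda))_{\lambda\in b\mathbb Z}$ with entries in $\{0,1\}$, and $\mathcal B_b^0=\{\mathbf x\in\mathcal B_b:\mathbf x(0)=1\}$. $\mathbf 1$ denotes the vector indexed by $a\mathbb Z$ with all entries $1$. $\mathcal S_{a,b,c}=\{t\in\mathbb R:\mathbf M_{a,b,c}(t)\mathbf x=\mathbf 1\text{ for some }\mathbf x\in\mathcal B_b^0\}$. *)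

theory Defs
  imports "HOL-Analysis.Analysis"
begin

text \<open>Rows of M_{a,b,c}(t) are indexed by mu = a*m (m :: int), columns by lambda = b*k (k :: int).
  Vectors indexed by b Z are represented as functions int => real (x k = x(b k)).\<close>

definition M_entry :: "real \<Rightarrow> real \<Rightarrow> real \<Rightarrow> real \<Rightarrow> int \<Rightarrow> int \<Rightarrow> real" where
  "M_entry a b c t m k = indicator {0..<c} (t - a * of_int m + b * of_int k)"

text \<open>(M x)(mu) = sum over lambda of chi(t - mu + lambda) x(lambda). Only finitely many entries
  of each row are nonzero (for b > 0), so the sum is taken over that finite support.\<close>
definition M_apply :: "real \<Rightarrow> real \<Rightarrow> real \<Rightarrow> real \<Rightarrow> (int \<Rightarrow> real) \<Rightarrow> int \<Rightarrow> real" where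
  "M_apply a b c t x m = (\<Sum>k\<in>{k::int. M_entry a b c t m k \<noteq> 0}. M_entry a b c t m k * x k)"

definition B_vecs :: "(int \<Rightarrow> real) set" where
  "B_vecs = {x. \<forall>k. x k \<in> {0, 1}}"

definition B0_vecs :: "(int \<Rightarrow> real) set" where
  "B0_vecs = {x \<in> B_vecs. x 0 = 1}"

definition S_set :: "real \<Rightarrow> real \<Rightarrow> real \<Rightarrow> real set" where
  "S_set a b c = {t. \<exists>x\<in>B0_vecs. \<forall>m. M_apply a b c t x m = 1}"

end

theory Submission
  imports Defs
begin

definition Wn :: "real \<Rightarrow> real \<Rightarrow> real \<Rightarrow> real \<Rightarrow> int \<Rightarrow> int set" where
  "Wn a b c t m = {k. 0 \<le> t - a * of_int m + b * of_int k \<and> t - a * of_int m + b * of_int k < c}"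

lemma Wn_eq: "{k. M_entry a b c t m k \<noteq> 0} = Wn a b c t m"
  by (auto simp: M_entry_def Wn_def indicator_def)

lemma Wn_finite:
  assumes "b > 0" shows "finite (Wn a b c t m)"
proof -
  have "Wn a b c t m \<subseteq> {\<lfloor>(a * of_int m - t) / b\<rfloor> .. \<lceil>(a * of_int m - t + c) / b\<rceil>}"
  proof
    fix k assume "k \<in> Wn a b c t m"
    hence h: "a * of_int m - t \<le> b * of_int k" "b * of_int k < a * of_int m - t + c"
      by (auto simp: Wn_def)
    have "(a * of_int m - t) / b \<le> of_int k" using h assms by (simp add: divide_le_eq mult.commute)
    moreover have "of_int k \<le> (a * of_int m - t + c) / b" using h assms by (simp add: le_divide_eq mult.commute)
    ultimately show "k \<in> {\<lfloor>(a * of_int m - t) / b\<rfloor> .. \<lceil>(a * of_int m - t + c) / b\<rceil>}"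
      by (simp add: floor_le_iff le_ceiling_iff)
  qed
  thus ?thesis by (rule finite_subset) simp
qed

lemma M_apply_eq: "M_apply a b c t x m = (\<Sum>k\<in>Wn a b c t m. x k)"
  unfolding M_apply_def Wn_eq
  by (rule sum.cong) (auto simp: M_entry_def Wn_def indicator_def)

lemma sol_props:
  assumes b: "b > 0" and x: "x \<in> B_vecs" and s: "M_apply a b c t x m = 1"
  shows "\<exists>k\<in>Wn a b c t m. x k = 1"
    and "\<And>j k. j \<in> Wn a b c t m \<Longrightarrow> k \<in> Wn a b c t m \<Longrightarrow> x j = 1 \<Longrightarrow> x k = 1 \<Longrightarrow> j = k"
proof -
  let ?W = "Wn a b c t m"
  have fin: "finite ?W" using Wn_finite b by blast
  have x01: "\<And>k. x k = 0 \<or> x k = 1" using x by (auto simp: B_vecs_def)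
  have "(\<Sum>k\<in>?W. x k) = (\<Sum>k\<in>{k\<in>?W. x k = 1}. x k)"
    using fin x01 by (intro sum.mono_neutral_right) auto
  also have "\<dots> = real (card {k\<in>?W. x k = 1})" by simp
  finally have c: "card {k\<in>?W. x k = 1} = 1" using s M_apply_eq[of a b c t x m] by simp
  then obtain z where z: "{k\<in>?W. x k = 1} = {z}" using card_1_singletonE by blast
  show "\<exists>k\<in>?W. x k = 1" using z by blast
  show "\<And>j k. j \<in> ?W \<Longrightarrow> k \<in> ?W \<Longrightarrow> x j = 1 \<Longrightarrow> x k = 1 \<Longrightarrow> j = k"
  proof -
    fix j k assume "j \<in> ?W" "k \<in> ?W" "x j = 1" "x k = 1"
    hence "j \<in> {z}" "k \<in> {z}" using z by blast+
    thus "j = k" by simp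
  qed
qed

lemma step_up:
  fixes a b c t :: real
  assumes ab: "0 < a" "a < b" "b < c"
    and xs: "x \<in> B_vecs" "\<forall>m. M_apply a b c t x m = 1" "x 0 = 1"
    and ys: "y \<in> B_vecs" "\<forall>m. M_apply a b c t y m = 1"
    and k: "k > 0" and IH: "\<forall>j. 0 \<le> j \<and> j < k \<longrightarrow> x j = y j"
    and xk: "x k = 1" and yk: "y k = 0"
  shows False
proof -
  define m where "m = \<lfloor>(b * of_int k + t - c) / a\<rfloor> + 1"
  have f1: "of_int m - 1 \<le> (b * of_int k + t - c) / a" "(b * of_int k + t - c) / a < of_int m"
    unfolding m_def by linarith+
  have m1: "a * of_int m - a \<le> b * of_int k + t - c"
    using f1(1) ab by (simp add: le_divide_eq algebra_simps)
  have m2: "b * of_int k + t - c < a * of_int m"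
    using f1(2) ab by (simp add: divide_less_eq algebra_simps)
  have kW: "k \<in> Wn a b c t m" unfolding Wn_def using m1 m2 ab by auto
  have up: "\<And>j. j \<in> Wn a b c t m \<Longrightarrow> j \<le> k"
  proof -
    fix j assume "j \<in> Wn a b c t m"
    hence "b * of_int j < a * of_int m - t + c" by (auto simp: Wn_def)
    hence "b * of_int j < b * (of_int k + 1)" using m1 ab by (simp add: algebra_simps)
    hence "of_int j < (of_int k + 1 :: real)" using ab by simp
    thus "j \<le> k" by linarith
  qed
  have b0: "b > 0" using ab by simp
  obtain j where j: "j \<in> Wn a b c t m" "y j = 1"
    using sol_props(1)[OF b0 ys(1) ys(2)[rule_format, of m]] by blast
  have jk: "j < k" using up[OF j(1)] j(2) yk by (cases "j = k") auto
  show False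
  proof (cases "0 \<le> j")
    case True
    hence "x j = 1" using IH jk j(2) by auto
    thus False using sol_props(2)[OF b0 xs(1) xs(2)[rule_format, of m] j(1) kW _ xk] jk by simp
  next
    case False
    have "0 \<in> Wn a b c t m"
      using j(1) kW False k ab unfolding Wn_def
      by (auto simp: algebra_simps) (smt (verit) mult_pos_neg mult_pos_pos of_int_less_0_iff of_int_pos)+
    thus False using sol_props(2)[OF b0 xs(1) xs(2)[rule_format, of m] _ kW xs(3) xk] k by simp
  qed
qed

lemma step_down:
  fixes a b c t :: real
  assumes ab: "0 < a" "a < b" "b < c"
    and xs: "x \<in> B_vecs" "\<forall>m. M_apply a b c t x m = 1" "x 0 = 1"
    and ys: "y \<in> B_vecs" "\<forall>m. M_apply a b c t y m = 1"
    and k: "k < 0" and IH: "\<forall>j. k < j \<and> j \<le> 0 \<longrightarrow> x j = y j"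
    and xk: "x k = 1" and yk: "y k = 0"
  shows False
proof -
  define m where "m = \<lfloor>(b * of_int k + t) / a\<rfloor>"
  have f1: "of_int m \<le> (b * of_int k + t) / a" "(b * of_int k + t) / a < of_int m + 1"
    unfolding m_def by linarith+
  have m1: "a * of_int m \<le> b * of_int k + t"
    using f1(1) ab by (simp add: le_divide_eq algebra_simps)
  have m2: "b * of_int k + t < a * of_int m + a"
    using f1(2) ab by (simp add: divide_less_eq algebra_simps)
  have kW: "k \<in> Wn a b c t m" unfolding Wn_def using m1 m2 ab by auto
  have lo: "\<And>j. j \<in> Wn a b c t m \<Longrightarrow> k \<le> j"
  proof -
    fix j assume "j \<in> Wn a b c t m"
    hence "a * of_int m - t \<le> b * of_int j" by (auto simp: Wn_def)
    hence "b * (of_int k - 1) < b * of_int j" using m2 ab by (simp add: algebra_simps)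
    hence "of_int k - 1 < (of_int j :: real)" using ab by simp
    thus "k \<le> j" by linarith
  qed
  have b0: "b > 0" using ab by simp
  obtain j where j: "j \<in> Wn a b c t m" "y j = 1"
    using sol_props(1)[OF b0 ys(1) ys(2)[rule_format, of m]] by blast
  have jk: "k < j" using lo[OF j(1)] j(2) yk by (cases "j = k") auto
  show False
  proof (cases "j \<le> 0")
    case True
    hence "x j = 1" using IH jk j(2) by auto
    thus False using sol_props(2)[OF b0 xs(1) xs(2)[rule_format, of m] j(1) kW _ xk] jk by simp
  next
    case False
    have "0 \<in> Wn a b c t m"
      using j(1) kW False k ab unfolding Wn_def
      by (auto simp: algebra_simps) (smt (verit) mult_pos_neg mult_pos_pos of_int_less_0_iff of_int_pos)+
    thus False using sol_props(2)[OF b0 xs(1) xs(2)[rule_format, of m] _ kW xs(3) xk] k by simp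
  qed
qed

lemma uniq:
  fixes a b c t :: real
  assumes ab: "0 < a" "a < b" "b < c"
    and xs: "x \<in> B0_vecs" "\<forall>m. M_apply a b c t x m = 1"
    and ys: "y \<in> B0_vecs" "\<forall>m. M_apply a b c t y m = 1"
  shows "x = y"
proof -
  have xB: "x \<in> B_vecs" "x 0 = 1" and yB: "y \<in> B_vecs" "y 0 = 1" using xs ys by (auto simp: B0_vecs_def)
  have x01: "\<And>k. x k = 0 \<or> x k = 1" using xB by (auto simp: B_vecs_def)
  have y01: "\<And>k. y k = 0 \<or> y k = 1" using yB by (auto simp: B_vecs_def)
  have up: "\<forall>j. 0 \<le> j \<and> j \<le> int n \<longrightarrow> x j = y j" for n :: nat
  proof (induction n)
    case 0 then show ?case using xB yB by auto
  next
    case (Suc n)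
    have IH: "\<forall>j. 0 \<le> j \<and> j < int (Suc n) \<longrightarrow> x j = y j" using Suc by auto
    have "x (int (Suc n)) = y (int (Suc n))"
    proof (rule ccontr)
      assume ne: "x (int (Suc n)) \<noteq> y (int (Suc n))"
      show False
      proof (cases "x (int (Suc n)) = 1")
        case True
        hence "y (int (Suc n)) = 0" using ne y01 by metis
        thus False using step_up[OF ab xB(1) xs(2) xB(2) yB(1) ys(2) _ IH True] by simp
      next
        case False
        hence "x (int (Suc n)) = 0" "y (int (Suc n)) = 1" using ne x01 y01 by metis+
        moreover have "\<forall>j. 0 \<le> j \<and> j < int (Suc n) \<longrightarrow> y j = x j" using IH by auto
        ultimately show False using step_up[OF ab yB(1) ys(2) yB(2) xB(1) xs(2), of "int (Suc n)"] by simp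
      qed
    qed
    then show ?case using IH by (metis le_less)
  qed
  have down: "\<forall>j. - int n \<le> j \<and> j \<le> 0 \<longrightarrow> x j = y j" for n :: nat
  proof (induction n)
    case 0 then show ?case using xB yB by auto
  next
    case (Suc n)
    have IH: "\<forall>j. - int (Suc n) < j \<and> j \<le> 0 \<longrightarrow> x j = y j" using Suc by auto
    have "x (- int (Suc n)) = y (- int (Suc n))"
    proof (rule ccontr)
      assume ne: "x (- int (Suc n)) \<noteq> y (- int (Suc n))"
      show False
      proof (cases "x (- int (Suc n)) = 1")
        case True
        hence "y (- int (Suc n)) = 0" using ne y01 by metis
        thus False using step_down[OF ab xB(1) xs(2) xB(2) yB(1) ys(2) _ IH True] by simp
      next
        case False
        hence "x (- int (Suc n)) = 0" "y (- int (Suc n)) = 1" using ne x01 y01 by metis+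
        moreover have "\<forall>j. - int (Suc n) < j \<and> j \<le> 0 \<longrightarrow> y j = x j" using IH by auto
        ultimately show False using step_down[OF ab yB(1) ys(2) yB(2) xB(1) xs(2), of "- int (Suc n)"] by simp
      qed
    qed
    then show ?case using IH by (metis le_less)
  qed
  show ?thesis
  proof
    fix j :: int
    show "x j = y j"
    proof (cases "0 \<le> j")
      case True thus ?thesis using up[of "nat j"] by simp
    next
      case False thus ?thesis using down[of "nat (- j)"] by simp
    qed
  qed
qed

theorem proposition3p9:
  fixes a b c :: real
  assumes "0 < a" "a < b" "b < c"
    and "b - a < c - of_int \<lfloor>c / b\<rfloor> * b" "c - of_int \<lfloor>c / b\<rfloor> * b < a"
    and "t \<in> S_set a b c"
  shows "\<exists>!x. x \<in> B0_vecs \<and> (\<forall>m. M_apply a b c t x m = 1)"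
proof -
  obtain x where "x \<in> B0_vecs" "\<forall>m. M_apply a b c t x m = 1"
    using assms(6) by (auto simp: S_set_def)
  thus ?thesis using uniq[OF assms(1-3)] by blast
qed

end
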